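(* Let $f,g\in\mathbb{F}[Y,Z]$. If $g$ has $r$ monomials, then $\mathrm{maxrank}(M_{fg})\le r\cdot\mathrm{maxrank}(M_f)$.
   Context: $\mathbb{F}$ is a field, $Y=\{y_1,\dots,y_m\}$ and $Z=\{z_1,\dots,z_m\}$ are disjoint sets of variables. For $f\in\mathbb{F}[Y,Z]$, the polynomial coefficient matrix $M_f$ is the $2^m\times 2^m$ matrix with entries in $\mathbb{F}[Y,Z]$, rows indexed by monic multilinear monomials $p$ in $Y$ and columns by monic multilinear monomials $q$ in $Z$, where $M_f(p,q)=G$ if and only if $f$ can be uniquely written as $f=pq\,G+Q$ with $G$ containing no variable other than those present in $p$ and $q$, and $Q$ having no monomial which is divisible by $pq$ and contains only variables present in $p$ and $q$. For $S:Y\cup Z\to\mathbb{F}$, $M_f|_S$ is obtained by evaluating each entry at $S$, and $\mathrm{maxrank}(M_f)=\max_S\mathrm{rank}(M_f|_S)$. *)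

theory Defs
  imports "HOL-Library.Poly_Mapping" "Jordan_Normal_Form.DL_Rank"
begin

text \<open>Multivariate polynomials over a field 'a in the variables y_0..y_(m-1)
  (encoded as Inl i) and z_0..z_(m-1) (encoded as Inr i): a polynomial is a
  finitely supported map from exponent vectors to coefficients.\<close>

type_synonym 'a mpoly = "(((nat + nat), nat) poly_mapping, 'a) poly_mapping"

definition YZ_vars :: "nat \<Rightarrow> (nat + nat) set" where
  "YZ_vars m = Inl ` {..<m} \<union> Inr ` {..<m}"

definition in_FYZ :: "nat \<Rightarrow> ('a::zero) mpoly \<Rightarrow> bool" where
  "in_FYZ m f \<longleftrightarrow> (\<forall>e\<in>Poly_Mapping.keys f. Poly_Mapping.keys e \<subseteq> YZ_vars m)"

definition pvars :: "('a::zero) mpoly \<Rightarrow> (nat + nat) set" where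
  "pvars G = (\<Union>e\<in>Poly_Mapping.keys G. Poly_Mapping.keys e)"

definition ml_exp :: "(nat + nat) set \<Rightarrow> ((nat + nat), nat) poly_mapping" where
  "ml_exp V = Abs_poly_mapping (\<lambda>v. if v \<in> V then 1 else 0)"

definition ml_mono :: "(nat + nat) set \<Rightarrow> ('a::{zero,one}) mpoly" where
  "ml_mono V = Poly_Mapping.single (ml_exp V) 1"

text \<open>Entry M_f(p,q) for p = prod of y_i (i in P), q = prod of z_j (j in Q):
  the unique G with f = p q G + Q', G using only variables of p,q, and Q'
  having no monomial divisible by pq that uses only variables of p,q.\<close>
definition pcm_entry :: "('a::comm_ring_1) mpoly \<Rightarrow> nat set \<Rightarrow> nat set \<Rightarrow> 'a mpoly" where
  "pcm_entry f P Q =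
     (let V = Inl ` P \<union> Inr ` Q in
      THE G. pvars G \<subseteq> V \<and>
        (\<exists>R. f = ml_mono (Inl ` P) * ml_mono (Inr ` Q) * G + R \<and>
             (\<forall>e\<in>Poly_Mapping.keys R. \<not> ((\<forall>v\<in>V. 1 \<le> Poly_Mapping.lookup e v) \<and> Poly_Mapping.keys e \<subseteq> V))))"

definition peval :: "((nat + nat) \<Rightarrow> 'a::comm_semiring_1) \<Rightarrow> 'a mpoly \<Rightarrow> 'a" where
  "peval S G = (\<Sum>e\<in>Poly_Mapping.keys G. Poly_Mapping.lookup G e * (\<Prod>v\<in>Poly_Mapping.keys e. S v ^ Poly_Mapping.lookup e v))"

text \<open>Index i < 2^m encodes the subset {k < m. bit i k} of {0..m-1}, i.e. a monic
  multilinear monomial; this is a bijection, so rows/columns of the 2^m x 2^m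
  matrix are indexed by all monic multilinear monomials in Y resp. Z.\<close>
definition idx_set :: "nat \<Rightarrow> nat \<Rightarrow> nat set" where
  "idx_set m i = {k. k < m \<and> bit i k}"

definition pcm_eval :: "nat \<Rightarrow> ('a::comm_ring_1) mpoly \<Rightarrow> ((nat + nat) \<Rightarrow> 'a) \<Rightarrow> 'a mat" where
  "pcm_eval m f S = mat (2^m) (2^m)
     (\<lambda>(i, j). peval S (pcm_entry f (idx_set m i) (idx_set m j)))"

definition maxrank :: "nat \<Rightarrow> ('a::field) mpoly \<Rightarrow> nat" where
  "maxrank m f = Max {vec_space.rank (2^m) (pcm_eval m f S) | S. True}"

end

theory Submission
  imports Defs
begin


context vec_space begin

lemma rank_le_span:
  assumes A: "A \<in> carrier_mat n nc" and T: "T \<subseteq> carrier_vec n" "finite T"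
    and sub: "set (cols A) \<subseteq> span T"
  shows "rank A \<le> card T"
proof -
  obtain S where S: "maximal S (\<lambda>T. T \<subseteq> set (cols A) \<and> lin_indpt T)"
    using maximal_exists[of "(\<lambda>T. T \<subseteq> set (cols A) \<and> lin_indpt T)" "card (set (cols A))" "{}"]
    by (meson List.finite_set card_mono empty_iff empty_subsetI finite_lin_indpt2 rev_finite_subset)
  have r: "rank A = card S" using rank_card_indpt[OF A S] .
  have S1: "S \<subseteq> set (cols A)" "lin_indpt S" using S unfolding maximal_def by auto
  have fS: "finite S" using S1 rev_finite_subset by blast
  obtain C where "finite C \<and> C\<subseteq>carrier V \<and> C\<subseteq>span T \<and> C\<inter>S={} \<and> int (card C) \<le> (int (card T)) - (int (card S)) \<and> (span (S \<union> C) = span T)"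
  proof -
    have "S \<subseteq> span T" using S1(1) sub by auto
    from replacement[OF fS T(2) _ S1(2) this] T(1) show ?thesis using that by auto
  qed
  then show ?thesis using r by linarith
qed

lemma cols_mult_in_span:
  assumes A: "A \<in> carrier_mat n k" and B: "B \<in> carrier_mat k nc"
  shows "set (cols (A * B)) \<subseteq> span (set (cols A))"
proof
  fix x assume "x \<in> set (cols (A * B))"
  then obtain j where j: "j < nc" "x = col (A * B) j" using A B
    by (metis cols_length cols_nth in_set_conv_nth index_mult_mat(3) carrier_matD(2))
  have "x = A *\<^sub>v col B j" using j A B by (auto simp add: mult_mat_vec_def intro!: eq_vecI)
  also have "A = mat_of_cols n (cols A)" using A mat_of_cols_cols[of A] by simp
  also have "col B j = vec (length (cols A)) (\<lambda>i. col B j $ i)"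
    using A B by (intro eq_vecI) auto
  also have "mat_of_cols n (cols A) *\<^sub>v vec (length (cols A)) (\<lambda>i. col B j $ i) = lincomb_list (\<lambda>i. col B j $ i) (cols A)"
    using A cols_dim[of A] by (subst lincomb_list_as_mat_mult) auto
  also have "\<dots> \<in> span_list (cols A)" unfolding span_list_def by auto
  also have "span_list (cols A) = span (set (cols A))" using A cols_dim[of A] by (intro span_list_as_span) auto
  finally show "x \<in> span (set (cols A))" .
qed

lemma rank_factor:
  assumes M: "M \<in> carrier_mat n nc"
  shows "\<exists>ws C. set ws \<subseteq> carrier_vec n \<and> length ws = rank M \<and> C \<in> carrier_mat (rank M) nc
     \<and> M = mat_of_cols n ws * C"
proof -
  obtain S where S: "maximal S (\<lambda>T. T \<subseteq> set (cols M) \<and> lin_indpt T)"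
    using maximal_exists[of "(\<lambda>T. T \<subseteq> set (cols M) \<and> lin_indpt T)" "card (set (cols M))" "{}"]
    by (meson List.finite_set card_mono empty_iff empty_subsetI finite_lin_indpt2 rev_finite_subset)
  have r: "rank M = card S" using rank_card_indpt[OF M S] .
  have S1: "S \<subseteq> set (cols M)" "lin_indpt S" using S unfolding maximal_def by auto
  have fS: "finite S" using S1 rev_finite_subset by blast
  have Sc: "S \<subseteq> carrier_vec n" using S1(1) cols_dim[of M] M by auto
  obtain ws where ws: "distinct ws" "set ws = S" using finite_distinct_list[OF fS] by blast
  have lw: "length ws = rank M" using r ws distinct_card by metis
  have wsc: "set ws \<subseteq> carrier_vec n" using ws Sc by auto
  have inspan: "col M j \<in> span S" if j: "j < nc" for j
  proof (rule ccontr)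
    assume ns: "col M j \<notin> span S"
    have cM: "col M j \<in> set (cols M)" using j M
      by (metis carrier_matD(2) cols_length cols_nth nth_mem)
    have cc: "col M j \<in> carrier_vec n" using j M by auto
    have nS: "col M j \<notin> S" using ns in_own_span[OF Sc] by auto
    have "lin_indpt (S \<union> {col M j})"
      using lin_dep_iff_in_span[OF Sc S1(2) cc nS] ns by blast
    moreover have "S \<union> {col M j} \<subseteq> set (cols M)" using S1 cM by auto
    ultimately have "S \<union> {col M j} = S" using S unfolding maximal_def by blast
    then show False using nS by auto
  qed
  have "\<forall>j. \<exists>c. j < nc \<longrightarrow> col M j = mat_of_cols n ws *\<^sub>v vec (length ws) c"
  proof (intro allI)
    fix j show "\<exists>c. j < nc \<longrightarrow> col M j = mat_of_cols n ws *\<^sub>v vec (length ws) c"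
    proof (cases "j < nc")
      case True
      then have "col M j \<in> span_list ws" using inspan span_list_as_span[OF wsc] ws by auto
      then obtain c where "col M j = lincomb_list c ws" unfolding span_list_def by auto
      moreover have "\<forall>w\<in>set ws. dim_vec w = n" using wsc by auto
      ultimately have "col M j = mat_of_cols n ws *\<^sub>v vec (length ws) c" using lincomb_list_as_mat_mult[of ws c] by simp
      then show ?thesis by blast
    qed auto
  qed
  then obtain cf where cf: "\<And>j. j < nc \<Longrightarrow> col M j = mat_of_cols n ws *\<^sub>v vec (length ws) (cf j)"
    by (metis (no_types))
  define C where "C = mat (length ws) nc (\<lambda>(i,j). cf j i)"
  have C: "C \<in> carrier_mat (rank M) nc" unfolding C_def using lw by auto
  have "M = mat_of_cols n ws * C"
  proof (rule eq_matI)
    fix i j assume i: "i < dim_row (mat_of_cols n ws * C)" and j: "j < dim_col (mat_of_cols n ws * C)"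
    then have i': "i < n" and j': "j < nc" using C by auto
    have cC: "col C j = vec (length ws) (cf j)" using j' unfolding C_def by (auto intro!: eq_vecI)
    have "M $$ (i,j) = col M j $ i" using i' j' M by auto
    also have "\<dots> = (mat_of_cols n ws *\<^sub>v vec (length ws) (cf j)) $ i" using cf[OF j'] by simp
    also have "\<dots> = row (mat_of_cols n ws) i \<bullet> col C j" using i' cC by simp
    also have "\<dots> = (mat_of_cols n ws * C) $$ (i,j)" using i' j' C by simp
    finally show "M $$ (i,j) = (mat_of_cols n ws * C) $$ (i,j)" .
  qed (use M C in auto)
  then show ?thesis using wsc lw C by blast
qed

end

lemma rank_mult3_le:
  fixes M :: "'a::field mat"
  assumes A: "A \<in> carrier_mat k n" and M: "M \<in> carrier_mat n n'" and B: "B \<in> carrier_mat n' l"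
  shows "vec_space.rank k (A * M * B) \<le> vec_space.rank n M"
proof -
  obtain ws C where ws: "set ws \<subseteq> carrier_vec n" "length ws = vec_space.rank n M"
    and C: "C \<in> carrier_mat (vec_space.rank n M) n'" and MC: "M = mat_of_cols n ws * C"
    using vec_space.rank_factor[OF M] by blast
  define d where "d = vec_space.rank n M"
  have W: "mat_of_cols n ws \<in> carrier_mat n d" using ws d_def by (metis mat_of_cols_carrier(1))
  have "A * M * B = (A * mat_of_cols n ws) * (C * B)"
  proof -
    have C': "C \<in> carrier_mat d n'" using C d_def by simp
    have "A * M * B = A * (mat_of_cols n ws * C) * B" using MC by simp
    also have "A * (mat_of_cols n ws * C) = (A * mat_of_cols n ws) * C"
      using assoc_mult_mat[OF A W C'] by simp
    also have "(A * mat_of_cols n ws) * C * B = (A * mat_of_cols n ws) * (C * B)"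
      using assoc_mult_mat[OF mult_carrier_mat[OF A W] C' B] by simp
    finally show ?thesis .
  qed
  moreover have AW: "A * mat_of_cols n ws \<in> carrier_mat k d" using A W by auto
  moreover have CB: "C * B \<in> carrier_mat d l" using C B d_def by auto
  ultimately have "vec_space.rank k (A * M * B) = vec_space.rank k ((A * mat_of_cols n ws) * (C * B))" by simp
  also have "\<dots> \<le> card (set (cols (A * mat_of_cols n ws)))"
    by (rule vec_space.rank_le_span[OF mult_carrier_mat[OF AW CB] _ _ vec_space.cols_mult_in_span[OF AW CB]])
       (use A AW cols_dim[of "A * mat_of_cols n ws"] in auto)
  also have "\<dots> \<le> d" using AW by (metis card_length cols_length carrier_matD(2))
  finally show ?thesis unfolding d_def .
qed



lemma lookup_mult_single_sum:
  fixes p :: "('k::cancel_comm_monoid_add \<Rightarrow>\<^sub>0 'b::comm_semiring_1)"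
  shows "Poly_Mapping.lookup (p * Poly_Mapping.single b c) e =
    (\<Sum>d\<in>Poly_Mapping.keys p. if e = d + b then Poly_Mapping.lookup p d * c else 0)"
proof -
  have inner: "(\<Sum>q. Poly_Mapping.lookup (Poly_Mapping.single b c) q when e = l + q) = (c when e = l + b)" for l
  proof -
    have "(\<Sum>q. Poly_Mapping.lookup (Poly_Mapping.single b c) q when e = l + q) = (\<Sum>q\<in>{b}. Poly_Mapping.lookup (Poly_Mapping.single b c) q when e = l + q)"
      by (rule Sum_any.expand_superset) (auto simp: lookup_single when_def)
    then show ?thesis by (simp add: when_def)
  qed
  have "Poly_Mapping.lookup (p * Poly_Mapping.single b c) e = (\<Sum>l. Poly_Mapping.lookup p l * (c when e = l + b))"
    by (simp add: lookup_mult inner)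
  also have "\<dots> = (\<Sum>l\<in>Poly_Mapping.keys p. Poly_Mapping.lookup p l * (c when e = l + b))"
    by (rule Sum_any.expand_superset) (auto simp: in_keys_iff)
  also have "\<dots> = (\<Sum>d\<in>Poly_Mapping.keys p. if e = d + b then Poly_Mapping.lookup p d * c else 0)"
    by (rule sum.cong) (auto simp: when_def)
  finally show ?thesis .
qed

lemma lookup_mult_single_hit:
  fixes p :: "('k::cancel_comm_monoid_add \<Rightarrow>\<^sub>0 'b::comm_semiring_1)"
  shows "Poly_Mapping.lookup (p * Poly_Mapping.single b c) (d + b) = Poly_Mapping.lookup p d * c"
proof -
  have "Poly_Mapping.lookup (p * Poly_Mapping.single b c) (d + b) =
    (\<Sum>d'\<in>Poly_Mapping.keys p. if d = d' then Poly_Mapping.lookup p d' * c else 0)"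
    unfolding lookup_mult_single_sum by (rule sum.cong) auto
  also have "\<dots> = Poly_Mapping.lookup p d * c" by (auto simp: in_keys_iff)
  finally show ?thesis .
qed

lemma lookup_mult_single_miss:
  fixes p :: "('k::cancel_comm_monoid_add \<Rightarrow>\<^sub>0 'b::comm_semiring_1)"
  assumes "\<And>d. e \<noteq> d + b"
  shows "Poly_Mapping.lookup (p * Poly_Mapping.single b c) e = 0"
  unfolding lookup_mult_single_sum using assms by simp

lemma keys_add_nat:
  fixes a b :: "('k \<Rightarrow>\<^sub>0 nat)"
  shows "Poly_Mapping.keys (a + b) = Poly_Mapping.keys a \<union> Poly_Mapping.keys b"
  by (auto simp: in_keys_iff lookup_add)

lemma lookup_ml_exp:
  assumes "finite V"
  shows "Poly_Mapping.lookup (ml_exp V) v = (if v \<in> V then 1 else 0)"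
proof -
  have "finite {x. (if x \<in> V then 1::nat else 0) \<noteq> 0}" using assms by simp
  then show ?thesis unfolding ml_exp_def by simp
qed

lemma keys_ml_exp: "finite V \<Longrightarrow> Poly_Mapping.keys (ml_exp V) = V"
  by (auto simp: in_keys_iff lookup_ml_exp split: if_splits)

definition VS :: "nat set \<Rightarrow> nat set \<Rightarrow> (nat + nat) set" where
  "VS P Q = Inl ` P \<union> Inr ` Q"

lemma finite_VS: "finite P \<Longrightarrow> finite Q \<Longrightarrow> finite (VS P Q)"
  unfolding VS_def by auto

lemma ml_mono_mult:
  assumes "finite P" "finite Q"
  shows "(ml_mono (Inl ` P) * ml_mono (Inr ` Q) :: ('a::comm_ring_1) mpoly) = Poly_Mapping.single (ml_exp (VS P Q)) 1"
proof -
  have "ml_exp (Inl ` P) + ml_exp (Inr ` Q) = ml_exp (VS P Q)"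
    by (rule poly_mapping_eqI) (auto simp: lookup_add lookup_ml_exp assms finite_VS VS_def)
  then show ?thesis unfolding ml_mono_def by (simp add: mult_single)
qed

lemma exp_split:
  fixes e t :: "((nat+nat) \<Rightarrow>\<^sub>0 nat)"
  assumes "\<And>v. Poly_Mapping.lookup t v \<le> Poly_Mapping.lookup e v"
  shows "e = (e - t) + t"
  by (rule poly_mapping_eqI) (simp add: lookup_add lookup_minus assms)

definition G0 :: "('a::comm_ring_1) mpoly \<Rightarrow> (nat+nat) set \<Rightarrow> 'a mpoly" where
  "G0 h V = Abs_poly_mapping (\<lambda>d. if Poly_Mapping.keys d \<subseteq> V then Poly_Mapping.lookup h (d + ml_exp V) else 0)"

lemma lookup_G0:
  shows "Poly_Mapping.lookup (G0 h V) d = (if Poly_Mapping.keys d \<subseteq> V then Poly_Mapping.lookup h (d + ml_exp V) else 0)"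
proof -
  have "{d. (if Poly_Mapping.keys d \<subseteq> V then Poly_Mapping.lookup h (d + ml_exp V) else 0) \<noteq> 0}
     \<subseteq> (\<lambda>e. e - ml_exp V) ` Poly_Mapping.keys h"
  proof
    fix d assume "d \<in> {d. (if Poly_Mapping.keys d \<subseteq> V then Poly_Mapping.lookup h (d + ml_exp V) else 0) \<noteq> 0}"
    then have "d + ml_exp V \<in> Poly_Mapping.keys h" by (auto simp: in_keys_iff split: if_splits)
    moreover have "d = (d + ml_exp V) - ml_exp V" by simp
    ultimately show "d \<in> (\<lambda>e. e - ml_exp V) ` Poly_Mapping.keys h" by blast
  qed
  then have "finite {d. (if Poly_Mapping.keys d \<subseteq> V then Poly_Mapping.lookup h (d + ml_exp V) else 0) \<noteq> 0}"
    by (rule finite_subset) auto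
  then show ?thesis unfolding G0_def by simp
qed

lemma pcm_entry_eq:
  fixes h :: "('a::comm_ring_1) mpoly"
  assumes fP: "finite P" and fQ: "finite Q"
  shows "pcm_entry h P Q = G0 h (VS P Q)"
proof -
  define V where "V = VS P Q"
  define t where "t = ml_exp V"
  define X :: "'a mpoly" where "X = Poly_Mapping.single t 1"
  have fV: "finite V" using fP fQ finite_VS V_def by blast
  have lt: "Poly_Mapping.lookup t v = (if v \<in> V then 1 else 0)" for v
    unfolding t_def using lookup_ml_exp[OF fV] .
  have kt: "Poly_Mapping.keys t = V" unfolding t_def using keys_ml_exp[OF fV] .
  have Veq: "Inl ` P \<union> Inr ` Q = V" by (simp add: V_def VS_def)
  have cond: "((\<forall>v\<in>V. 1 \<le> Poly_Mapping.lookup e v) \<and> Poly_Mapping.keys e \<subseteq> V) \<longleftrightarrow> Poly_Mapping.keys e = V"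
    for e :: "(nat+nat) \<Rightarrow>\<^sub>0 nat"
    by (auto simp: in_keys_iff)
  have XM: "ml_mono (Inl ` P) * ml_mono (Inr ` Q) = X"
    unfolding X_def t_def V_def using ml_mono_mult[OF fP fQ] by simp
  have lX: "Poly_Mapping.lookup (X * G) (d + t) = Poly_Mapping.lookup G d" for G d
    unfolding X_def by (simp add: mult.commute[of "Poly_Mapping.single t 1"] lookup_mult_single_hit)
  have ent: "pcm_entry h P Q = (THE G. pvars G \<subseteq> V \<and> (\<exists>R. h = X * G + R \<and> (\<forall>e\<in>Poly_Mapping.keys R. Poly_Mapping.keys e \<noteq> V)))"
    unfolding pcm_entry_def Let_def Veq XM using cond by simp
  have split: "e = (e - t) + t" if "Poly_Mapping.keys e = V" for e
    by (rule exp_split) (use that in \<open>auto simp: lt in_keys_iff\<close>)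
  show ?thesis
    unfolding ent V_def[symmetric]
  proof (rule the_equality)
    show "pvars (G0 h V) \<subseteq> V \<and> (\<exists>R. h = X * G0 h V + R \<and> (\<forall>e\<in>Poly_Mapping.keys R. Poly_Mapping.keys e \<noteq> V))"
    proof
      show "pvars (G0 h V) \<subseteq> V"
        unfolding pvars_def by (auto simp: in_keys_iff[of _ "G0 h V"] lookup_G0 split: if_splits)
      show "\<exists>R. h = X * G0 h V + R \<and> (\<forall>e\<in>Poly_Mapping.keys R. Poly_Mapping.keys e \<noteq> V)"
      proof (intro exI conjI ballI)
        show "h = X * G0 h V + (h - X * G0 h V)" by simp
        fix e assume e: "e \<in> Poly_Mapping.keys (h - X * G0 h V)"
        show "Poly_Mapping.keys e \<noteq> V"
        proof
          assume ke: "Poly_Mapping.keys e = V"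
          have ks: "Poly_Mapping.keys (e - t) \<subseteq> V"
            using ke by (auto simp: in_keys_iff lookup_minus)
          have "Poly_Mapping.lookup (X * G0 h V) e = Poly_Mapping.lookup (X * G0 h V) ((e - t) + t)"
            using split[OF ke] by simp
          also have "\<dots> = Poly_Mapping.lookup h ((e - t) + t)" using lX ks by (simp add: lookup_G0 t_def)
          also have "\<dots> = Poly_Mapping.lookup h e" using split[OF ke] by simp
          finally show False using e by (simp add: in_keys_iff lookup_minus)
        qed
      qed
    qed
  next
    fix G assume G: "pvars G \<subseteq> V \<and> (\<exists>R. h = X * G + R \<and> (\<forall>e\<in>Poly_Mapping.keys R. Poly_Mapping.keys e \<noteq> V))"
    then obtain R where R: "h = X * G + R" "\<And>e. e\<in>Poly_Mapping.keys R \<Longrightarrow> Poly_Mapping.keys e \<noteq> V" by blast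
    show "G = G0 h V"
    proof (rule poly_mapping_eqI)
      fix d
      show "Poly_Mapping.lookup G d = Poly_Mapping.lookup (G0 h V) d"
      proof (cases "Poly_Mapping.keys d \<subseteq> V")
        case True
        have "Poly_Mapping.keys (d + t) = V" using True kt keys_add_nat[of d t] by auto
        then have "Poly_Mapping.lookup R (d + t) = 0" using R(2) by (auto simp: in_keys_iff)
        then have "Poly_Mapping.lookup h (d + t) = Poly_Mapping.lookup G d"
          using R(1) lX by (simp add: lookup_add)
        then show ?thesis using True by (simp add: lookup_G0 t_def)
      next
        case False
        then have "d \<notin> Poly_Mapping.keys G" using G unfolding pvars_def by auto
        then show ?thesis using False by (simp add: lookup_G0 in_keys_iff)
      qed
    qed
  qed
qed

definition wt :: "((nat + nat) \<Rightarrow> 'a::comm_semiring_1) \<Rightarrow> (nat+nat) set \<Rightarrow> ((nat+nat) \<Rightarrow>\<^sub>0 nat) \<Rightarrow> 'a" where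
  "wt S V e = (\<Prod>v\<in>V. S v ^ (Poly_Mapping.lookup e v - 1))"

lemma peval_G0:
  fixes h :: "('a::comm_ring_1) mpoly"
  assumes fV: "finite V"
  shows "peval S (G0 h V) = (\<Sum>e\<in>{e\<in>Poly_Mapping.keys h. Poly_Mapping.keys e = V}. Poly_Mapping.lookup h e * wt S V e)"
  unfolding peval_def
proof (rule sum.reindex_bij_witness[where i = "\<lambda>e. e - ml_exp V" and j = "\<lambda>d. d + ml_exp V"])
  have lt: "Poly_Mapping.lookup (ml_exp V) v = (if v \<in> V then 1 else 0)" for v
    using lookup_ml_exp[OF fV] .
  have kt: "Poly_Mapping.keys (ml_exp V) = V" using keys_ml_exp[OF fV] .
  have split: "e = (e - ml_exp V) + ml_exp V" if "Poly_Mapping.keys e = V" for e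
    by (rule exp_split) (use that in \<open>auto simp: lt in_keys_iff\<close>)
  fix a assume a: "a \<in> Poly_Mapping.keys (G0 h V)"
  then have aV: "Poly_Mapping.keys a \<subseteq> V" and ah: "Poly_Mapping.lookup h (a + ml_exp V) \<noteq> 0"
    by (auto simp: in_keys_iff lookup_G0 split: if_splits)
  show "a + ml_exp V - ml_exp V = a" by simp
  have kk: "Poly_Mapping.keys (a + ml_exp V) = V" using aV kt keys_add_nat[of a "ml_exp V"] by auto
  show "a + ml_exp V \<in> {e \<in> Poly_Mapping.keys h. Poly_Mapping.keys e = V}" using kk ah by (simp add: in_keys_iff)
  have "wt S V (a + ml_exp V) = (\<Prod>v\<in>V. S v ^ Poly_Mapping.lookup a v)"
    unfolding wt_def by (rule prod.cong) (auto simp: lookup_add lt)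
  also have "\<dots> = (\<Prod>v\<in>Poly_Mapping.keys a. S v ^ Poly_Mapping.lookup a v)"
    by (rule prod.mono_neutral_right[OF fV aV]) (auto simp: in_keys_iff)
  finally show "Poly_Mapping.lookup h (a + ml_exp V) * wt S V (a + ml_exp V) =
    Poly_Mapping.lookup (G0 h V) a * (\<Prod>v\<in>Poly_Mapping.keys a. S v ^ Poly_Mapping.lookup a v)"
    using aV by (simp add: lookup_G0)
next
  have lt: "Poly_Mapping.lookup (ml_exp V) v = (if v \<in> V then 1 else 0)" for v
    using lookup_ml_exp[OF fV] .
  have split: "e = (e - ml_exp V) + ml_exp V" if "Poly_Mapping.keys e = V" for e
    by (rule exp_split) (use that in \<open>auto simp: lt in_keys_iff\<close>)
  fix b assume b: "b \<in> {e \<in> Poly_Mapping.keys h. Poly_Mapping.keys e = V}"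
  then have kb: "Poly_Mapping.keys b = V" and hb: "Poly_Mapping.lookup h b \<noteq> 0" by (auto simp: in_keys_iff)
  show "b - ml_exp V + ml_exp V = b" using split[OF kb] by simp
  have ks: "Poly_Mapping.keys (b - ml_exp V) \<subseteq> V"
    using kb by (auto simp: in_keys_iff lookup_minus)
  show "b - ml_exp V \<in> Poly_Mapping.keys (G0 h V)"
    using ks hb split[OF kb] by (simp add: in_keys_iff lookup_G0)
qed

lemma peval_entry:
  fixes h :: "('a::comm_ring_1) mpoly"
  assumes fP: "finite P" and fQ: "finite Q" and A: "finite A" "Poly_Mapping.keys h \<subseteq> A"
  shows "peval S (pcm_entry h P Q) = (\<Sum>e\<in>A. if Poly_Mapping.keys e = VS P Q then Poly_Mapping.lookup h e * wt S (VS P Q) e else 0)"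
proof -
  have "peval S (pcm_entry h P Q) = (\<Sum>e\<in>{e\<in>Poly_Mapping.keys h. Poly_Mapping.keys e = VS P Q}. Poly_Mapping.lookup h e * wt S (VS P Q) e)"
    using pcm_entry_eq[OF fP fQ, of h] peval_G0[OF finite_VS[OF fP fQ], of S h] by simp
  also have "\<dots> = (\<Sum>e\<in>{e\<in>A. Poly_Mapping.keys e = VS P Q}. Poly_Mapping.lookup h e * wt S (VS P Q) e)"
    by (rule sum.mono_neutral_left) (use A in \<open>auto simp: in_keys_iff\<close>)
  also have "\<dots> = (\<Sum>e\<in>A. if Poly_Mapping.keys e = VS P Q then Poly_Mapping.lookup h e * wt S (VS P Q) e else 0)"
    using A(1) by (simp add: sum.inter_filter)
  finally show ?thesis .
qed

lemma idx_set_sub: "idx_set m i \<subseteq> {..<m}" unfolding idx_set_def by auto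
lemma finite_idx_set: "finite (idx_set m i)" using idx_set_sub finite_subset by blast

lemma not_bit_high:
  fixes i :: nat
  assumes "i < 2^m" "m \<le> n"
  shows "\<not> bit i n"
proof -
  have "(2::nat)^m \<le> 2^n" using assms(2) by (simp add: power_increasing)
  then have "i < 2^n" using assms(1) by linarith
  then have "i div 2^n = 0" by (rule div_less)
  then show ?thesis by (simp add: bit_nat_def)
qed

lemma idx_set_inj: "inj_on (idx_set m) {..<2^m}"
proof (rule inj_onI)
  fix i j assume i: "i \<in> {..<(2::nat)^m}" and j: "j \<in> {..<(2::nat)^m}" and eq: "idx_set m i = idx_set m j"
  have "bit i n = bit j n" for n
  proof (cases "n < m")
    case True
    then show ?thesis using eq unfolding idx_set_def by blast
  next
    case False
    then show ?thesis using not_bit_high[of i m n] not_bit_high[of j m n] i j by auto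
  qed
  then show "i = j" by (simp add: bit_eq_iff)
qed

lemma idx_set_bij: "bij_betw (idx_set m) {..<2^m} (Pow {..<m})"
proof -
  have img: "idx_set m ` {..<2^m} \<subseteq> Pow {..<m}" using idx_set_sub by auto
  have "card (idx_set m ` {..<2^m}) = 2^m" using card_image[OF idx_set_inj] by simp
  also have "\<dots> = card (Pow {..<m})" by (simp add: card_Pow)
  finally have "idx_set m ` {..<2^m} = Pow {..<m}"
    using card_subset_eq[OF _ img] by auto
  then show ?thesis using idx_set_inj unfolding bij_betw_def by simp
qed

lemma idx_exists:
  assumes "P \<subseteq> {..<m}"
  shows "\<exists>i<2^m. idx_set m i = P"
  using idx_set_bij[of m] assms unfolding bij_betw_def by (metis PowI imageE lessThan_iff)

lemma idx_unique:
  assumes "i < 2^m" "j < 2^m" "idx_set m i = idx_set m j"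
  shows "i = j"
  using idx_set_inj[of m] assms by (auto dest: inj_onD)

lemma pcm_eval_carrier: "pcm_eval m h S \<in> carrier_mat (2^m) (2^m)"
  unfolding pcm_eval_def by simp

lemma pcm_eval_add:
  fixes h1 h2 :: "('a::field) mpoly"
  shows "pcm_eval m (h1 + h2) S = pcm_eval m h1 S + pcm_eval m h2 S"
proof (rule eq_matI)
  fix i j assume i: "i < dim_row (pcm_eval m h1 S + pcm_eval m h2 S)" and j: "j < dim_col (pcm_eval m h1 S + pcm_eval m h2 S)"
  then have i': "i < 2^m" and j': "j < 2^m" by (auto simp: pcm_eval_def)
  let ?A = "Poly_Mapping.keys h1 \<union> Poly_Mapping.keys h2"
  have fA: "finite ?A" by simp
  have k: "Poly_Mapping.keys (h1 + h2) \<subseteq> ?A" by (rule keys_add)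
  define V where "V = VS (idx_set m i) (idx_set m j)"
  have e1: "peval S (pcm_entry h1 (idx_set m i) (idx_set m j)) =
     (\<Sum>e\<in>?A. if Poly_Mapping.keys e = V then Poly_Mapping.lookup h1 e * wt S V e else 0)"
    unfolding V_def by (rule peval_entry) (auto intro: finite_idx_set)
  have e2: "peval S (pcm_entry h2 (idx_set m i) (idx_set m j)) =
     (\<Sum>e\<in>?A. if Poly_Mapping.keys e = V then Poly_Mapping.lookup h2 e * wt S V e else 0)"
    unfolding V_def by (rule peval_entry) (auto intro: finite_idx_set)
  have e3: "peval S (pcm_entry (h1 + h2) (idx_set m i) (idx_set m j)) =
     (\<Sum>e\<in>?A. if Poly_Mapping.keys e = V then Poly_Mapping.lookup (h1 + h2) e * wt S V e else 0)"
    unfolding V_def by (rule peval_entry) (use k in \<open>auto intro: finite_idx_set\<close>)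
  have e: "peval S (pcm_entry (h1 + h2) (idx_set m i) (idx_set m j)) =
        peval S (pcm_entry h1 (idx_set m i) (idx_set m j)) + peval S (pcm_entry h2 (idx_set m i) (idx_set m j))"
    unfolding e1 e2 e3 sum.distrib[symmetric] by (rule sum.cong) (auto simp: lookup_add distrib_right)
  show "pcm_eval m (h1 + h2) S $$ (i, j) = (pcm_eval m h1 S + pcm_eval m h2 S) $$ (i, j)"
    using i' j' e by (simp add: pcm_eval_def)
qed (auto simp: pcm_eval_def)

lemma pcm_eval_zero: "pcm_eval m (0::('a::field) mpoly) S = 0\<^sub>m (2^m) (2^m)"
proof (rule eq_matI)
  fix i j assume i: "i < dim_row (0\<^sub>m (2^m) (2^m) :: 'a mat)" and j: "j < dim_col (0\<^sub>m (2^m) (2^m) :: 'a mat)"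
  have "peval S (pcm_entry (0::'a mpoly) (idx_set m i) (idx_set m j)) = 0"
    by (subst peval_entry[where A="{}"]) (auto intro: finite_idx_set)
  then show "pcm_eval m 0 S $$ (i, j) = 0\<^sub>m (2^m) (2^m) $$ (i, j)" using i j by (simp add: pcm_eval_def)
qed (auto simp: pcm_eval_def)

definition PD :: "((nat+nat) \<Rightarrow>\<^sub>0 nat) \<Rightarrow> nat set" where "PD d = {k. Inl k \<in> Poly_Mapping.keys d}"
definition QD :: "((nat+nat) \<Rightarrow>\<^sub>0 nat) \<Rightarrow> nat set" where "QD d = {k. Inr k \<in> Poly_Mapping.keys d}"

lemma keys_VS: "Poly_Mapping.keys d = VS (PD d) (QD d)"
  unfolding VS_def PD_def QD_def
  by (auto simp: image_iff) (metis sum.exhaust)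

lemma finite_PD: "finite (PD d)"
proof -
  have "PD d = Inl -` Poly_Mapping.keys d" unfolding PD_def by auto
  then show ?thesis by (simp add: finite_vimageI)
qed

lemma finite_QD: "finite (QD d)"
proof -
  have "QD d = Inr -` Poly_Mapping.keys d" unfolding QD_def by auto
  then show ?thesis by (simp add: finite_vimageI)
qed

lemma VS_eq_iff: "VS A B = VS C D \<longleftrightarrow> A = C \<and> B = D"
proof
  assume e: "VS A B = VS C D"
  have "A = {k. Inl k \<in> VS A B}" "B = {k. Inr k \<in> VS A B}"
       "C = {k. Inl k \<in> VS C D}" "D = {k. Inr k \<in> VS C D}" unfolding VS_def by auto
  then show "A = C \<and> B = D" using e by metis
qed simp

lemma VS_Un: "VS A B \<union> VS C D = VS (A \<union> C) (B \<union> D)"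
  unfolding VS_def by auto

lemma prod_VS:
  assumes "finite P" "finite Q"
  shows "(\<Prod>v\<in>VS P Q. g v) = (\<Prod>k\<in>P. g (Inl k)) * (\<Prod>k\<in>Q. g (Inr k))"
proof -
  have "(\<Prod>v\<in>VS P Q. g v) = (\<Prod>v\<in>Inl ` P. g v) * (\<Prod>v\<in>Inr ` Q. g v)"
    unfolding VS_def by (rule prod.union_disjoint) (use assms in auto)
  also have "(\<Prod>v\<in>Inl ` P. g v) = (\<Prod>k\<in>P. g (Inl k))" using prod.reindex[of Inl P g] by (simp add: inj_on_def)
  also have "(\<Prod>v\<in>Inr ` Q. g v) = (\<Prod>k\<in>Q. g (Inr k))" using prod.reindex[of Inr Q g] by (simp add: inj_on_def)
  finally show ?thesis .
qed

lemma prod_shift: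
  fixes F :: "nat \<Rightarrow> 'a::comm_semiring_1"
  assumes fP: "finite P" and AP: "A \<subseteq> P" and x1: "\<And>k. k \<in> A \<Longrightarrow> 1 \<le> x k" and x0: "\<And>k. k \<in> P \<Longrightarrow> k \<notin> A \<Longrightarrow> x k = 0"
  shows "(\<Prod>k\<in>P. F k ^ (x k + y k - 1)) = (\<Prod>k\<in>P. F k ^ (y k + (if k \<in> A then 1 else 0) - 1)) * (\<Prod>k\<in>A. F k ^ (x k - 1))"
proof -
  have "(\<Prod>k\<in>A. F k ^ (x k - 1)) = (\<Prod>k\<in>P. if k \<in> A then F k ^ (x k - 1) else 1)"
    using fP AP by (simp add: prod.If_cases Int_absorb1)
  then have "(\<Prod>k\<in>P. F k ^ (y k + (if k \<in> A then 1 else 0) - 1)) * (\<Prod>k\<in>A. F k ^ (x k - 1))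
     = (\<Prod>k\<in>P. F k ^ (y k + (if k \<in> A then 1 else 0) - 1) * (if k \<in> A then F k ^ (x k - 1) else 1))"
    by (simp add: prod.distrib)
  also have "\<dots> = (\<Prod>k\<in>P. F k ^ (x k + y k - 1))"
  proof (rule prod.cong)
    fix k assume k: "k \<in> P"
    show "F k ^ (y k + (if k \<in> A then 1 else 0) - 1) * (if k \<in> A then F k ^ (x k - 1) else 1) = F k ^ (x k + y k - 1)"
    proof (cases "k \<in> A")
      case True
      then have "x k + y k - 1 = y k + (x k - 1)" using x1 by force
      then show ?thesis using True by (simp add: power_add)
    next
      case False
      then show ?thesis using x0[OF k] by simp
    qed
  qed simp
  finally show ?thesis by simp
qed

definition BY :: "((nat+nat) \<Rightarrow>\<^sub>0 nat) \<Rightarrow> nat set" where "BY b = PD b"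
definition BZ :: "((nat+nat) \<Rightarrow>\<^sub>0 nat) \<Rightarrow> nat set" where "BZ b = QD b"

definition KY :: "((nat + nat) \<Rightarrow> 'a::comm_semiring_1) \<Rightarrow> ((nat+nat) \<Rightarrow>\<^sub>0 nat) \<Rightarrow> nat set \<Rightarrow> nat set \<Rightarrow> 'a" where
  "KY S b P P' = (if P' \<union> PD b = P then (\<Prod>k\<in>P. S (Inl k) ^ (Poly_Mapping.lookup b (Inl k) + (if k \<in> P' then 1 else 0) - 1)) else 0)"
definition KZ :: "((nat + nat) \<Rightarrow> 'a::comm_semiring_1) \<Rightarrow> ((nat+nat) \<Rightarrow>\<^sub>0 nat) \<Rightarrow> nat set \<Rightarrow> nat set \<Rightarrow> 'a" where
  "KZ S b Q Q' = (if Q' \<union> QD b = Q then (\<Prod>k\<in>Q. S (Inr k) ^ (Poly_Mapping.lookup b (Inr k) + (if k \<in> Q' then 1 else 0) - 1)) else 0)"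

lemma key_d:
  fixes S :: "(nat + nat) \<Rightarrow> 'a::comm_semiring_1"
  assumes fP: "finite P" and fQ: "finite Q"
  shows "(if Poly_Mapping.keys (d + b) = VS P Q then wt S (VS P Q) (d + b) else 0)
     = KY S b P (PD d) * KZ S b Q (QD d) * wt S (Poly_Mapping.keys d) d"
proof -
  have kdb: "Poly_Mapping.keys (d + b) = VS (PD d \<union> PD b) (QD d \<union> QD b)"
    using keys_add_nat[of d b] keys_VS[of d] keys_VS[of b] VS_Un by metis
  show ?thesis
  proof (cases "PD d \<union> PD b = P \<and> QD d \<union> QD b = Q")
    case False
    then show ?thesis unfolding kdb VS_eq_iff KY_def KZ_def by auto
  next
    case True
    have PdP: "PD d \<subseteq> P" and QdQ: "QD d \<subseteq> Q" using True by auto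
    have x1: "1 \<le> Poly_Mapping.lookup d (Inl k)" if "k \<in> PD d" for k
      using that unfolding PD_def by (simp add: in_keys_iff)
    have x0: "Poly_Mapping.lookup d (Inl k) = 0" if "k \<notin> PD d" for k
      using that unfolding PD_def by (simp add: in_keys_iff)
    have z1: "1 \<le> Poly_Mapping.lookup d (Inr k)" if "k \<in> QD d" for k
      using that unfolding QD_def by (simp add: in_keys_iff)
    have z0: "Poly_Mapping.lookup d (Inr k) = 0" if "k \<notin> QD d" for k
      using that unfolding QD_def by (simp add: in_keys_iff)
    have "wt S (VS P Q) (d + b) =
       (\<Prod>k\<in>P. S (Inl k) ^ (Poly_Mapping.lookup d (Inl k) + Poly_Mapping.lookup b (Inl k) - 1)) *
       (\<Prod>k\<in>Q. S (Inr k) ^ (Poly_Mapping.lookup d (Inr k) + Poly_Mapping.lookup b (Inr k) - 1))"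
      unfolding wt_def prod_VS[OF fP fQ] by (simp add: lookup_add)
    also have "\<dots> = ((\<Prod>k\<in>P. S (Inl k) ^ (Poly_Mapping.lookup b (Inl k) + (if k \<in> PD d then 1 else 0) - 1)) *
        (\<Prod>k\<in>PD d. S (Inl k) ^ (Poly_Mapping.lookup d (Inl k) - 1))) *
       ((\<Prod>k\<in>Q. S (Inr k) ^ (Poly_Mapping.lookup b (Inr k) + (if k \<in> QD d then 1 else 0) - 1)) *
        (\<Prod>k\<in>QD d. S (Inr k) ^ (Poly_Mapping.lookup d (Inr k) - 1)))"
      using prod_shift[OF fP PdP x1 x0, where F="\<lambda>k. S (Inl k)" and y="\<lambda>k. Poly_Mapping.lookup b (Inl k)"]
        prod_shift[OF fQ QdQ z1 z0, where F="\<lambda>k. S (Inr k)" and y="\<lambda>k. Poly_Mapping.lookup b (Inr k)"]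
      by simp
    also have "\<dots> = KY S b P (PD d) * KZ S b Q (QD d) * wt S (Poly_Mapping.keys d) d"
      unfolding KY_def KZ_def wt_def keys_VS[of d] prod_VS[OF finite_PD finite_QD] using True
      by (simp add: ac_simps)
    finally show ?thesis using True kdb by simp
  qed
qed

lemma double_delta:
  fixes X :: "nat \<Rightarrow> nat \<Rightarrow> 'a::comm_monoid_add"
  assumes "i0 < N" "j0 < N"
  shows "(\<Sum>j'<N. \<Sum>i'<N. if i' = i0 \<and> j' = j0 then X i' j' else 0) = X i0 j0"
proof -
  have "(\<Sum>j'<N. \<Sum>i'<N. if i' = i0 \<and> j' = j0 then X i' j' else 0) = (\<Sum>j'<N. if j' = j0 then X i0 j' else 0)"
  proof (rule sum.cong)
    fix j' show "(\<Sum>i'<N. if i' = i0 \<and> j' = j0 then X i' j' else 0) = (if j' = j0 then X i0 j' else 0)"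
      using assms by (cases "j' = j0") auto
  qed simp
  also have "\<dots> = X i0 j0" using assms by simp
  finally show ?thesis .
qed

lemma mat3_entry:
  fixes A E C :: "'a::comm_semiring_1 mat"
  assumes "A \<in> carrier_mat N N" "E \<in> carrier_mat N N" "C \<in> carrier_mat N N" "i < N" "j < N"
  shows "(A * E * C) $$ (i, j) = (\<Sum>j'<N. (\<Sum>i'<N. A $$ (i, i') * E $$ (i', j')) * C $$ (j', j))"
proof -
  have "(A * E * C) $$ (i, j) = (\<Sum>ia<N. A $$ (i, ia) * (\<Sum>i<N. E $$ (ia, i) * C $$ (i, j)))"
    using assms by (simp add: scalar_prod_def atLeast0LessThan)
  also have "\<dots> = (\<Sum>j'<N. (\<Sum>i'<N. A $$ (i, i') * E $$ (i', j')) * C $$ (j', j))"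
    by (simp add: sum_distrib_left sum_distrib_right mult.assoc) (rule sum.swap)
  finally show ?thesis .
qed

lemma pcm_eval_mono:
  fixes f :: "('a::field) mpoly"
  assumes fY: "in_FYZ m f"
  shows "pcm_eval m (f * Poly_Mapping.single b c) S =
     mat (2^m) (2^m) (\<lambda>(i,i'). c * KY S b (idx_set m i) (idx_set m i')) * pcm_eval m f S
       * mat (2^m) (2^m) (\<lambda>(j',j). KZ S b (idx_set m j) (idx_set m j'))"
    (is "_ = ?A * ?E * ?C")
proof (rule eq_matI)
  let ?N = "2^m :: nat"
  let ?I = "idx_set m"
  fix i j assume i: "i < dim_row (?A * ?E * ?C)" and j: "j < dim_col (?A * ?E * ?C)"
  then have i': "i < ?N" and j': "j < ?N" by auto
  define V where "V = VS (?I i) (?I j)"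
  let ?T = "\<lambda>d. Poly_Mapping.lookup f d * c * (KY S b (?I i) (PD d) * KZ S b (?I j) (QD d) * wt S (Poly_Mapping.keys d) d)"
  define A where "A = (\<lambda>d. d + b) ` Poly_Mapping.keys f"
  have fA: "finite A" unfolding A_def by simp
  have kA: "Poly_Mapping.keys (f * Poly_Mapping.single b c) \<subseteq> A"
  proof
    fix e assume e: "e \<in> Poly_Mapping.keys (f * Poly_Mapping.single b c)"
    then obtain d where d: "e = d + b" using lookup_mult_single_miss[of e b f c] by (auto simp: in_keys_iff)
    then have "Poly_Mapping.lookup f d * c \<noteq> 0" using e lookup_mult_single_hit[of f b c d] by (simp add: in_keys_iff)
    then show "e \<in> A" using d unfolding A_def by (auto simp: in_keys_iff)
  qed
  have L: "peval S (pcm_entry (f * Poly_Mapping.single b c) (?I i) (?I j)) = (\<Sum>d\<in>Poly_Mapping.keys f. ?T d)"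
  proof -
    have "peval S (pcm_entry (f * Poly_Mapping.single b c) (?I i) (?I j)) =
      (\<Sum>e\<in>A. if Poly_Mapping.keys e = V then Poly_Mapping.lookup (f * Poly_Mapping.single b c) e * wt S V e else 0)"
      unfolding V_def by (rule peval_entry[OF finite_idx_set finite_idx_set fA kA])
    also have "\<dots> = (\<Sum>d\<in>Poly_Mapping.keys f. if Poly_Mapping.keys (d + b) = V then Poly_Mapping.lookup (f * Poly_Mapping.single b c) (d + b) * wt S V (d + b) else 0)"
      unfolding A_def by (subst sum.reindex) (auto simp: inj_on_def)
    also have "\<dots> = (\<Sum>d\<in>Poly_Mapping.keys f. Poly_Mapping.lookup f d * c * (if Poly_Mapping.keys (d + b) = V then wt S V (d + b) else 0))"
      by (rule sum.cong) (auto simp: lookup_mult_single_hit)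
    also have "\<dots> = (\<Sum>d\<in>Poly_Mapping.keys f. ?T d)"
      unfolding V_def using key_d[OF finite_idx_set finite_idx_set, where b=b and S=S] by simp
    finally show ?thesis .
  qed
  have Eent: "?E $$ (i', j') = (\<Sum>d\<in>Poly_Mapping.keys f. if Poly_Mapping.keys d = VS (?I i') (?I j') then Poly_Mapping.lookup f d * wt S (VS (?I i') (?I j')) d else 0)"
    if "i' < ?N" "j' < ?N" for i' j'
    using that by (simp add: pcm_eval_def peval_entry[OF finite_idx_set finite_idx_set finite_keys subset_refl])
  have "(?A * ?E * ?C) $$ (i, j) = (\<Sum>j'<?N. (\<Sum>i'<?N. ?A $$ (i, i') * ?E $$ (i', j')) * ?C $$ (j', j))"
    by (rule mat3_entry) (use i' j' in \<open>auto simp: pcm_eval_def\<close>)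
  also have "\<dots> = (\<Sum>j'<?N. \<Sum>i'<?N. \<Sum>d\<in>Poly_Mapping.keys f.
      if Poly_Mapping.keys d = VS (?I i') (?I j') then c * KY S b (?I i) (?I i') * KZ S b (?I j) (?I j') * (Poly_Mapping.lookup f d * wt S (Poly_Mapping.keys d) d) else 0)"
  proof (rule sum.cong[OF refl])
    fix j' assume j'': "j' \<in> {..<?N}"
    show "(\<Sum>i'<?N. ?A $$ (i, i') * ?E $$ (i', j')) * ?C $$ (j', j) = (\<Sum>i'<?N. \<Sum>d\<in>Poly_Mapping.keys f.
      if Poly_Mapping.keys d = VS (?I i') (?I j') then c * KY S b (?I i) (?I i') * KZ S b (?I j) (?I j') * (Poly_Mapping.lookup f d * wt S (Poly_Mapping.keys d) d) else 0)"
      unfolding sum_distrib_right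
    proof (rule sum.cong[OF refl])
      fix i' assume i'': "i' \<in> {..<?N}"
      show "?A $$ (i, i') * ?E $$ (i', j') * ?C $$ (j', j) = (\<Sum>d\<in>Poly_Mapping.keys f.
      if Poly_Mapping.keys d = VS (?I i') (?I j') then c * KY S b (?I i) (?I i') * KZ S b (?I j) (?I j') * (Poly_Mapping.lookup f d * wt S (Poly_Mapping.keys d) d) else 0)"
        using i' j' i'' j'' by (simp add: Eent sum_distrib_left sum_distrib_right ac_simps if_distrib cong: if_cong)
    qed
  qed
  also have "\<dots> = (\<Sum>d\<in>Poly_Mapping.keys f. \<Sum>j'<?N. \<Sum>i'<?N.
      if Poly_Mapping.keys d = VS (?I i') (?I j') then c * KY S b (?I i) (?I i') * KZ S b (?I j) (?I j') * (Poly_Mapping.lookup f d * wt S (Poly_Mapping.keys d) d) else 0)"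
    by (subst sum.swap) (subst (2) sum.swap, rule refl)
  also have "\<dots> = (\<Sum>d\<in>Poly_Mapping.keys f. ?T d)"
  proof (rule sum.cong[OF refl])
    fix d assume d: "d \<in> Poly_Mapping.keys f"
    have "Poly_Mapping.keys d \<subseteq> YZ_vars m" using fY d unfolding in_FYZ_def by auto
    then have "PD d \<subseteq> {..<m}" "QD d \<subseteq> {..<m}" unfolding PD_def QD_def YZ_vars_def by auto
    then obtain i0 j0 where i0: "i0 < ?N" "?I i0 = PD d" and j0: "j0 < ?N" "?I j0 = QD d"
      using idx_exists by metis
    have iff: "Poly_Mapping.keys d = VS (?I i') (?I j') \<longleftrightarrow> i' = i0 \<and> j' = j0" if "i' < ?N" "j' < ?N" for i' j'
      using that i0 j0 idx_unique[of i' m i0] idx_unique[of j' m j0] unfolding keys_VS[of d] VS_eq_iff by metis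
    have "(\<Sum>j'<?N. \<Sum>i'<?N.
      if Poly_Mapping.keys d = VS (?I i') (?I j') then c * KY S b (?I i) (?I i') * KZ S b (?I j) (?I j') * (Poly_Mapping.lookup f d * wt S (Poly_Mapping.keys d) d) else 0)
      = (\<Sum>j'<?N. \<Sum>i'<?N.
      if i' = i0 \<and> j' = j0 then c * KY S b (?I i) (?I i') * KZ S b (?I j) (?I j') * (Poly_Mapping.lookup f d * wt S (Poly_Mapping.keys d) d) else 0)"
      by (rule sum.cong[OF refl], rule sum.cong[OF refl]) (simp add: iff)
    also have "\<dots> = c * KY S b (?I i) (?I i0) * KZ S b (?I j) (?I j0) * (Poly_Mapping.lookup f d * wt S (Poly_Mapping.keys d) d)"
      by (rule double_delta[OF i0(1) j0(1)])
    also have "\<dots> = ?T d" using i0 j0 by (simp add: ac_simps)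
    finally show "(\<Sum>j'<?N. \<Sum>i'<?N.
      if Poly_Mapping.keys d = VS (?I i') (?I j') then c * KY S b (?I i) (?I i') * KZ S b (?I j) (?I j') * (Poly_Mapping.lookup f d * wt S (Poly_Mapping.keys d) d) else 0) = ?T d" .
  qed
  finally have R: "(?A * ?E * ?C) $$ (i, j) = (\<Sum>d\<in>Poly_Mapping.keys f. ?T d)" .
  show "pcm_eval m (f * Poly_Mapping.single b c) S $$ (i, j) = (?A * ?E * ?C) $$ (i, j)"
    using i' j' L R by (simp add: pcm_eval_def)
qed (auto simp: pcm_eval_def)



lemma poly_sum_single:
  fixes g :: "('k \<Rightarrow>\<^sub>0 'b::comm_monoid_add)"
  shows "g = (\<Sum>b\<in>Poly_Mapping.keys g. Poly_Mapping.single b (Poly_Mapping.lookup g b))"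
proof (rule poly_mapping_eqI)
  fix k
  have "(\<Sum>b\<in>Poly_Mapping.keys g. Poly_Mapping.lookup (Poly_Mapping.single b (Poly_Mapping.lookup g b)) k)
     = (\<Sum>b\<in>Poly_Mapping.keys g. if b = k then Poly_Mapping.lookup g b else 0)"
    by (rule sum.cong) (auto simp: lookup_single when_def)
  also have "\<dots> = Poly_Mapping.lookup g k" by (auto simp: in_keys_iff)
  finally show "Poly_Mapping.lookup g k = Poly_Mapping.lookup (\<Sum>b\<in>Poly_Mapping.keys g. Poly_Mapping.single b (Poly_Mapping.lookup g b)) k"
    by (simp add: lookup_sum)
qed

lemma rank_set_finite:
  "finite {vec_space.rank (2^m) (pcm_eval m h S) | S. True}" (is "finite ?X")
proof -
  have "?X \<subseteq> {..2^m}" using vec_space.rank_le_nc[OF pcm_eval_carrier] by auto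
  then show ?thesis using finite_subset by blast
qed

lemma rank_le_maxrank:
  fixes h :: "('a::field) mpoly"
  shows "vec_space.rank (2^m) (pcm_eval m h S) \<le> maxrank m h"
  unfolding maxrank_def by (rule Max_ge[OF rank_set_finite]) auto

theorem corollary3:
  fixes f g :: "('a::field) mpoly" and m r :: nat
  assumes "in_FYZ m f" and "in_FYZ m g"
    and "card (Poly_Mapping.keys g) = r"
  shows "maxrank m (f * g) \<le> r * maxrank m f"
proof -
  let ?N = "2^m :: nat"
  let ?R = "maxrank m f"
  have mono: "vec_space.rank ?N (pcm_eval m (f * Poly_Mapping.single b c) S) \<le> ?R" for b c S
  proof -
    have "vec_space.rank ?N (pcm_eval m (f * Poly_Mapping.single b c) S) \<le> vec_space.rank ?N (pcm_eval m f S)"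
      unfolding pcm_eval_mono[OF assms(1)]
      by (rule rank_mult3_le[OF _ pcm_eval_carrier]) auto
    also have "\<dots> \<le> ?R" by (rule rank_le_maxrank)
    finally show ?thesis .
  qed
  have ind: "vec_space.rank ?N (pcm_eval m (f * (\<Sum>b\<in>B. Poly_Mapping.single b (Poly_Mapping.lookup g b))) S) \<le> card B * ?R"
    if "finite B" for B S
    using that
  proof (induction B rule: finite_induct)
    case empty
    then show ?case by (simp add: pcm_eval_zero vec_space.rank_0I)
  next
    case (insert x F)
    have "vec_space.rank ?N (pcm_eval m (f * (\<Sum>b\<in>insert x F. Poly_Mapping.single b (Poly_Mapping.lookup g b))) S)
      = vec_space.rank ?N (pcm_eval m (f * Poly_Mapping.single x (Poly_Mapping.lookup g x)) S
          + pcm_eval m (f * (\<Sum>b\<in>F. Poly_Mapping.single b (Poly_Mapping.lookup g b))) S)"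
      using insert by (simp add: distrib_left pcm_eval_add)
    also have "\<dots> \<le> vec_space.rank ?N (pcm_eval m (f * Poly_Mapping.single x (Poly_Mapping.lookup g x)) S)
          + vec_space.rank ?N (pcm_eval m (f * (\<Sum>b\<in>F. Poly_Mapping.single b (Poly_Mapping.lookup g b))) S)"
      by (rule vec_space.rank_subadditive[OF pcm_eval_carrier pcm_eval_carrier])
    also have "\<dots> \<le> ?R + card F * ?R" using mono insert.IH by (intro add_mono) auto
    also have "\<dots> = card (insert x F) * ?R" using insert by simp
    finally show ?case .
  qed
  have all: "vec_space.rank ?N (pcm_eval m (f * g) S) \<le> r * ?R" for S
    using ind[of "Poly_Mapping.keys g" S] assms(3) poly_sum_single[of g] by simp
  have "Max {vec_space.rank ?N (pcm_eval m (f * g) S) | S. True} \<le> r * ?R"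
    using all rank_set_finite[of m "f * g"] by (subst Max_le_iff) auto
  then show ?thesis by (simp add: maxrank_def)
qed

end
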